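(* Let $M$ be a bi-variate homogeneous symmetric mean having a symmetric asymptotic expansion with coefficients $(a_n)_{n\ge0}$. Then for fixed real $s,t$ with $s\ne\pm t$, $M(x+s,x+t)\sim\sum_{m\ge0}a_m(s,t)x^{-m+1}$ as $x\to\infty$, where $$a_m(s,t)=2^{-m}\sum_{n=0}^{\lfloor m/2\rfloor}a_n\binom{1-2n}{m-2n}(t-s)^{2n}(t+s)^{m-2n},\qquad m\in\mathbb N_0.$$
   Context: A bi-variate mean is $M:(0,\infty)^2\to(0,\infty)$ with $\min(s,t)\le M(s,t)\le\max(s,t)$; symmetric: $M(s,t)=M(t,s)$; homogeneous: $M(\lambda s,\lambda t)=\lambda M(s,t)$. $M$ has a symmetric asymptotic expansion with coefficients $(a_n)$ if for every fixed real $t$ and every $N\ge0$, $M(x-t,x+t)=\sum_{n=0}^Na_nt^{2n}x^{-2n+1}+o(x^{-2N+1})$ as $x\to\infty$. The binomial coefficient $\binom{r}{k}=r(r-1)\cdots(r-k+1)/k!$ for real $r$. The notation $F(x)\sim\sum_m c_mx^{-m+1}$ means $F(x)=\sum_{m=0}^Nc_mx^{-m+1}+o(x^{-N+1})$ for every $N$. *)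

theory Defs
  imports Complex_Main "HOL-Library.Landau_Symbols"
begin

text \<open>A bi-variate mean on (0,inf)^2; M is a total function on real pairs but only
  its values on positive arguments are constrained.\<close>
definition is_mean :: "(real \<Rightarrow> real \<Rightarrow> real) \<Rightarrow> bool" where
  "is_mean M \<longleftrightarrow> (\<forall>s>0. \<forall>t>0. M s t > 0 \<and> min s t \<le> M s t \<and> M s t \<le> max s t)"

definition symmetric_mean :: "(real \<Rightarrow> real \<Rightarrow> real) \<Rightarrow> bool" where
  "symmetric_mean M \<longleftrightarrow> (\<forall>s>0. \<forall>t>0. M s t = M t s)"

definition homogeneous_mean :: "(real \<Rightarrow> real \<Rightarrow> real) \<Rightarrow> bool" where
  "homogeneous_mean M \<longleftrightarrow> (\<forall>l>0. \<forall>s>0. \<forall>t>0. M (l * s) (l * t) = l * M s t)"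

definition has_sym_asym_expansion :: "(real \<Rightarrow> real \<Rightarrow> real) \<Rightarrow> (nat \<Rightarrow> real) \<Rightarrow> bool" where
  "has_sym_asym_expansion M a \<longleftrightarrow>
     (\<forall>t::real. \<forall>N::nat.
        (\<lambda>x. M (x - t) (x + t) - (\<Sum>n\<le>N. a n * t ^ (2*n) * x powr (1 - 2 * real n)))
          \<in> o[at_top](\<lambda>x. x powr (1 - 2 * real N)))"

definition asym_coeff :: "(nat \<Rightarrow> real) \<Rightarrow> real \<Rightarrow> real \<Rightarrow> nat \<Rightarrow> real" where
  "asym_coeff a s t m = (1 / 2 ^ m) *
     (\<Sum>n\<le>m div 2. a n * ((1 - 2 * real n) gchoose (m - 2 * n))
        * (t - s) ^ (2 * n) * (t + s) ^ (m - 2 * n))"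

end

theory Submission imports Defs "HOL-Analysis.Analysis" "HOL-Library.Landau_Symbols" "HOL-Real_Asymp.Real_Asymp" begin

definition tailg :: "real \<Rightarrow> nat \<Rightarrow> real \<Rightarrow> real" where
  "tailg r K z = (\<Sum>j. (r gchoose (j + Suc K)) * z ^ j)"

lemma tailg_eq:
  fixes r z :: real
  assumes "\<bar>z\<bar> < 1"
  shows "summable (\<lambda>j. (r gchoose (j + Suc K)) * z ^ j)"
    and "(1 + z) powr r - (\<Sum>k\<le>K. (r gchoose k) * z ^ k) = z ^ Suc K * tailg r K z"
proof -
  have S: "(\<lambda>n. (r gchoose n) * z^n) sums (1 + z) powr r" by (rule gen_binomial_real[OF assms])
  have S2: "(\<lambda>i. (r gchoose (i + Suc K)) * z^(i + Suc K)) sums ((1 + z) powr r - (\<Sum>i<Suc K. (r gchoose i) * z^i))"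
    using S sums_iff_shift[of "\<lambda>n. (r gchoose n) * z^n" "Suc K"] by simp
  have le: "{..K} = {..<Suc K}" by auto
  have main: "summable (\<lambda>j. (r gchoose (j + Suc K)) * z ^ j)
      \<and> (1 + z) powr r - (\<Sum>k\<le>K. (r gchoose k) * z ^ k) = z ^ Suc K * tailg r K z"
  proof (cases "z = 0")
    case True
    have "(\<Sum>k\<le>K. (r gchoose k) * z ^ k) = 1"
      using True by (simp add: zero_power sum.atMost_shift del: power_Suc)
    moreover have "summable (\<lambda>j. (r gchoose (j + Suc K)) * z ^ j)" using True by simp
    ultimately show ?thesis using True by simp
  next
    case False
    have "(\<lambda>i. z ^ Suc K * ((r gchoose (i + Suc K)) * z^i)) sums (z ^ Suc K * (((1 + z) powr r - (\<Sum>i<Suc K. (r gchoose i) * z^i)) / z ^ Suc K))"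
      using S2 False by (simp add: power_add mult_ac)
    then have T: "(\<lambda>i. (r gchoose (i + Suc K)) * z^i) sums (((1 + z) powr r - (\<Sum>i<Suc K. (r gchoose i) * z^i)) / z ^ Suc K)"
      using sums_mult_iff False by (metis zero_less_power2 power_not_zero) 
    then show ?thesis using False unfolding tailg_def le by (auto simp: sums_iff)
  qed
  then show "summable (\<lambda>j. (r gchoose (j + Suc K)) * z ^ j)" by blast
  from main show "(1 + z) powr r - (\<Sum>k\<le>K. (r gchoose k) * z ^ k) = z ^ Suc K * tailg r K z" by blast
qed

lemma tailg_cont: "isCont (tailg r K) 0"
proof -
  have "summable (\<lambda>j. (r gchoose (j + Suc K)) * (1/2::real) ^ j)"
    by (rule tailg_eq(1)) simp
  then have "isCont (\<lambda>x. \<Sum>n. (r gchoose (n + Suc K)) * x^n) 0"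
    by (rule isCont_powser) simp
  then show ?thesis unfolding tailg_def[abs_def] .
qed

lemma binom_expansion:
  fixes r c :: real
  shows "(\<lambda>x. (x + c) powr r - (\<Sum>k\<le>K. (r gchoose k) * c ^ k * x powr (r - real k)))
           \<in> O[at_top](\<lambda>x. x powr (r - real K - 1))"
proof -
  have lim: "((\<lambda>x::real. c / x) \<longlongrightarrow> 0) at_top" by real_asymp
  have "((\<lambda>x. tailg r K (c / x)) \<longlongrightarrow> tailg r K 0) at_top"
    using isCont_tendsto_compose[OF tailg_cont lim] .
  then have "eventually (\<lambda>x. dist (tailg r K (c / x)) (tailg r K 0) < 1) at_top"
    by (rule tendstoD) simp
  then have bnd: "eventually (\<lambda>x. \<bar>tailg r K (c / x)\<bar> \<le> \<bar>tailg r K 0\<bar> + 1) at_top"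
    by eventually_elim (auto simp: dist_real_def)
  have big: "eventually (\<lambda>x. x > 2 * \<bar>c\<bar> + 1) at_top" by real_asymp
  have eq: "eventually (\<lambda>x. (x + c) powr r - (\<Sum>k\<le>K. (r gchoose k) * c ^ k * x powr (r - real k))
       = c ^ Suc K * tailg r K (c / x) * x powr (r - real K - 1)) at_top"
    using big
  proof eventually_elim
    case (elim x)
    have xpos: "x > 0" using elim by linarith
    have z: "\<bar>c / x\<bar> < 1" using elim xpos by (simp add: abs_div divide_less_eq)
    have z1: "1 + c / x \<ge> 0" using z by linarith
    have "x * (1 + c / x) = x + c" using xpos by (simp add: field_simps)
    then have "(x + c) powr r = (x * (1 + c / x)) powr r" by simp
    also have "\<dots> = x powr r * (1 + c / x) powr r" using xpos z1 by (simp add: powr_mult)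
    finally have e1: "(x + c) powr r = x powr r * (1 + c / x) powr r" .
    have e2: "x powr (r - real k) = x powr r * (1 / x) ^ k" for k
      using xpos by (simp add: powr_diff powr_realpow power_one_over divide_inverse power_inverse)
    have e3: "(\<Sum>k\<le>K. (r gchoose k) * c ^ k * x powr (r - real k)) = x powr r * (\<Sum>k\<le>K. (r gchoose k) * (c / x) ^ k)"
      by (simp add: e2 sum_distrib_left power_divide mult_ac)
    have e4: "x powr (r - real K - 1) = x powr r / x ^ Suc K"
      using xpos by (simp add: powr_diff powr_realpow[symmetric] algebra_simps powr_add)
    have T: "(1 + c/x) powr r - (\<Sum>k\<le>K. (r gchoose k) * (c/x)^k) = (c/x)^Suc K * tailg r K (c/x)"
      using tailg_eq(2)[of "c/x" r K] z by simp
    have "(x + c) powr r - (\<Sum>k\<le>K. (r gchoose k) * c ^ k * x powr (r - real k))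
        = x powr r * ((1 + c/x) powr r - (\<Sum>k\<le>K. (r gchoose k) * (c/x)^k))"
      by (simp only: e1 e3 right_diff_distrib)
    also have "\<dots> = x powr r * ((c/x)^Suc K * tailg r K (c/x))" by (simp only: T)
    also have "\<dots> = c ^ Suc K * tailg r K (c / x) * (x powr r / x ^ Suc K)"
      by (simp only: power_divide) (simp add: field_simps)
    finally show ?case by (simp only: e4)
  qed
  have "(\<lambda>x. c ^ Suc K * tailg r K (c / x) * x powr (r - real K - 1)) \<in> O[at_top](\<lambda>x. x powr (r - real K - 1))"
  proof (rule bigoI[of _ "\<bar>c ^ Suc K\<bar> * (\<bar>tailg r K 0\<bar> + 1)"])
    show "eventually (\<lambda>x. norm (c ^ Suc K * tailg r K (c / x) * x powr (r - real K - 1))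
        \<le> \<bar>c ^ Suc K\<bar> * (\<bar>tailg r K 0\<bar> + 1) * norm (x powr (r - real K - 1))) at_top"
      using bnd by eventually_elim (simp add: abs_mult mult_left_mono mult_right_mono)
  qed
  then show ?thesis using landau_o.big.in_cong[OF eq] by simp
qed

lemma smallo_cmult_any: "f \<in> o[F](g) \<Longrightarrow> (\<lambda>x. C * f x) \<in> o[F](g)"
  by (cases "C = 0") simp_all

lemma powr_small: "p < q \<Longrightarrow> (\<lambda>x::real. x powr p) \<in> o[at_top](\<lambda>x. x powr q)"
  using powr_smallo_iff[of "\<lambda>x. x" at_top p q] by (simp add: filterlim_ident)

lemma powr_big: "p \<le> q \<Longrightarrow> (\<lambda>x::real. x powr p) \<in> O[at_top](\<lambda>x. x powr q)"
  using powr_bigo_iff[of "\<lambda>x. x" at_top p q] by (simp add: filterlim_ident)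

lemma shift_powr_big: "(\<lambda>x::real. (x + c) powr p) \<in> O[at_top](\<lambda>x. x powr p)"
proof -
  have "(\<lambda>x. (x + c) powr p - (\<Sum>k\<le>0. (p gchoose k) * c ^ k * x powr (p - real k)))
           \<in> O[at_top](\<lambda>x. x powr (p - real 0 - 1))" by (rule binom_expansion)
  then have 1: "(\<lambda>x. (x + c) powr p - x powr p) \<in> O[at_top](\<lambda>x. x powr p)"
    using landau_o.big_trans[OF _ powr_big[of "p - 1" p]] by simp
  have 2: "(\<lambda>x::real. x powr p) \<in> O[at_top](\<lambda>x. x powr p)" by simp
  show ?thesis using sum_in_bigo(1)[OF 1 2] by simp
qed

lemma prop_core:
  fixes M :: "real \<Rightarrow> real \<Rightarrow> real" and a :: "nat \<Rightarrow> real" and s t :: real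
  assumes "has_sym_asym_expansion M a"
  shows "\<forall>N::nat. (\<lambda>x. M (x + s) (x + t) - (\<Sum>m\<le>N. asym_coeff a s t m * x powr (1 - real m)))
           \<in> o[at_top](\<lambda>x. x powr (1 - real N))"
proof
  fix N :: nat
  define c where "c = (s + t) / 2"
  define u where "u = (t - s) / 2"
  define trm where "trm = (\<lambda>(n::nat, k::nat) (x::real). a n * u ^ (2 * n) * ((1 - 2 * real n) gchoose k) * c ^ k
        * x powr ((1 - 2 * real n) - real k))"
  define A where "A = {(n, k). n \<le> N \<and> k \<le> N \<and> 2 * n + k \<le> N}"
  define B where "B = {..N} \<times> {..N}"
  have AB: "A \<subseteq> B" unfolding A_def B_def by auto
  have finB: "finite B" unfolding B_def by simp
  have T: "(\<Sum>m\<le>N. asym_coeff a s t m * x powr (1 - real m)) = (\<Sum>p\<in>A. trm p x)" for x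
  proof -
    have "asym_coeff a s t m * x powr (1 - real m) = (\<Sum>n\<le>m div 2. trm (n, m - 2 * n) x)" for m
    proof -
      have "asym_coeff a s t m * x powr (1 - real m) = (\<Sum>n\<le>m div 2. a n * ((1 - 2 * real n) gchoose (m - 2 * n))
        * (t - s) ^ (2 * n) * (t + s) ^ (m - 2 * n) / 2 ^ m * x powr (1 - real m))"
        unfolding asym_coeff_def by (simp add: sum_distrib_left sum_distrib_right mult_ac)
      also have "\<dots> = (\<Sum>n\<le>m div 2. trm (n, m - 2 * n) x)"
      proof (rule sum.cong[OF refl])
        fix n assume "n \<in> {..m div 2}"
        then have le: "2 * n \<le> m" by auto
        have p: "(2::real) ^ m = 2 ^ (2 * n) * 2 ^ (m - 2 * n)"
          using le by (simp add: power_add[symmetric])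
        have r: "real (m - 2 * n) = real m - 2 * real n" using le by (simp add: of_nat_diff)
        show "a n * ((1 - 2 * real n) gchoose (m - 2 * n)) * (t - s) ^ (2 * n) * (t + s) ^ (m - 2 * n) / 2 ^ m
             * x powr (1 - real m) = trm (n, m - 2 * n) x"
          unfolding trm_def c_def u_def using le
          by (simp add: p r power_divide algebra_simps)
      qed
      finally show ?thesis .
    qed
    then have "(\<Sum>m\<le>N. asym_coeff a s t m * x powr (1 - real m)) = (\<Sum>m\<le>N. \<Sum>n\<le>m div 2. trm (n, m - 2 * n) x)"
      by simp
    also have "\<dots> = (\<Sum>(m, n)\<in>Sigma {..N} (\<lambda>m. {..m div 2}). trm (n, m - 2 * n) x)"
      by (rule sum.Sigma) auto
    also have "\<dots> = (\<Sum>p\<in>A. trm p x)"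
      by (rule sum.reindex_bij_witness[where i = "\<lambda>(n, k). (2 * n + k, n)" and j = "\<lambda>(m, n). (n, m - 2 * n)"])
        (auto simp: A_def)
    finally show ?thesis .
  qed
  have E0: "(\<lambda>y. M (y - u) (y + u) - (\<Sum>n\<le>N. a n * u ^ (2*n) * y powr (1 - 2 * real n)))
          \<in> o[at_top](\<lambda>y. y powr (1 - 2 * real N))"
    using assms unfolding has_sym_asym_expansion_def by blast
  have fl: "filterlim (\<lambda>x::real. x + c) at_top at_top" by real_asymp
  have E1: "(\<lambda>x. M (x + c - u) (x + c + u) - (\<Sum>n\<le>N. a n * u ^ (2*n) * (x + c) powr (1 - 2 * real n)))
          \<in> o[at_top](\<lambda>x. (x + c) powr (1 - 2 * real N))"
    using landau_o.small.compose[OF E0 fl] .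
  have cu: "x + c - u = x + s" "x + c + u = x + t" for x unfolding c_def u_def by (simp_all add: field_simps)
  have E: "(\<lambda>x. M (x + s) (x + t) - (\<Sum>n\<le>N. a n * u ^ (2*n) * (x + c) powr (1 - 2 * real n)))
          \<in> o[at_top](\<lambda>x. x powr (1 - real N))"
    using landau_o.small_big_trans[OF landau_o.small_big_trans[OF E1 shift_powr_big] powr_big[of "1 - 2 * real N" "1 - real N"]]
    by (simp add: cu)
  have R: "(\<lambda>x. \<Sum>n\<le>N. a n * u ^ (2*n) * ((x + c) powr (1 - 2 * real n)
       - (\<Sum>k\<le>N. ((1 - 2 * real n) gchoose k) * c ^ k * x powr ((1 - 2 * real n) - real k))))
       \<in> o[at_top](\<lambda>x. x powr (1 - real N))"
  proof (rule big_sum_in_smallo)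
    fix n assume "n \<in> {..N}"
    have "(\<lambda>x. (x + c) powr (1 - 2 * real n)
       - (\<Sum>k\<le>N. ((1 - 2 * real n) gchoose k) * c ^ k * x powr ((1 - 2 * real n) - real k)))
       \<in> o[at_top](\<lambda>x. x powr (1 - real N))"
      by (rule landau_o.big_small_trans[OF binom_expansion powr_small]) simp
    then show "(\<lambda>x. a n * u ^ (2*n) * ((x + c) powr (1 - 2 * real n)
       - (\<Sum>k\<le>N. ((1 - 2 * real n) gchoose k) * c ^ k * x powr ((1 - 2 * real n) - real k))))
       \<in> o[at_top](\<lambda>x. x powr (1 - real N))"
      by (rule smallo_cmult_any)
  qed
  have X: "(\<lambda>x. \<Sum>p\<in>B - A. trm p x) \<in> o[at_top](\<lambda>x. x powr (1 - real N))"
  proof (rule big_sum_in_smallo)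
    fix p assume p: "p \<in> B - A"
    obtain n k where nk: "p = (n, k)" by (cases p)
    with p have "2 * n + k > N" unfolding A_def B_def by auto
    then have "(1 - 2 * real n) - real k < 1 - real N" by linarith
    then have "(\<lambda>x. a n * u ^ (2 * n) * ((1 - 2 * real n) gchoose k) * c ^ k
        * x powr ((1 - 2 * real n) - real k)) \<in> o[at_top](\<lambda>x. x powr (1 - real N))"
      by (intro smallo_cmult_any powr_small)
    then show "(\<lambda>x. trm p x) \<in> o[at_top](\<lambda>x. x powr (1 - real N))"
      unfolding nk trm_def by simp
  qed
  have D: "(\<Sum>n\<le>N. a n * u ^ (2*n) * (\<Sum>k\<le>N. ((1 - 2 * real n) gchoose k) * c ^ k * x powr ((1 - 2 * real n) - real k)))
      = (\<Sum>p\<in>B. trm p x)" for x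
  proof -
    have "(\<Sum>p\<in>B. trm p x) = (\<Sum>n\<le>N. \<Sum>k\<le>N. trm (n, k) x)"
      unfolding B_def by (simp add: sum.cartesian_product)
    then show ?thesis unfolding trm_def by (simp add: sum_distrib_left mult_ac)
  qed
  have split: "(\<Sum>p\<in>B. trm p x) = (\<Sum>p\<in>A. trm p x) + (\<Sum>p\<in>B - A. trm p x)" for x
    using sum.subset_diff[OF AB finB] by (simp add: add.commute)
  have ident: "M (x + s) (x + t) - (\<Sum>m\<le>N. asym_coeff a s t m * x powr (1 - real m))
     = (M (x + s) (x + t) - (\<Sum>n\<le>N. a n * u ^ (2*n) * (x + c) powr (1 - 2 * real n)))
       + (\<Sum>n\<le>N. a n * u ^ (2*n) * ((x + c) powr (1 - 2 * real n)
       - (\<Sum>k\<le>N. ((1 - 2 * real n) gchoose k) * c ^ k * x powr ((1 - 2 * real n) - real k))))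
       + (\<Sum>p\<in>B - A. trm p x)" for x
  proof -
    have "(\<Sum>n\<le>N. a n * u ^ (2*n) * ((x + c) powr (1 - 2 * real n)
       - (\<Sum>k\<le>N. ((1 - 2 * real n) gchoose k) * c ^ k * x powr ((1 - 2 * real n) - real k))))
       = (\<Sum>n\<le>N. a n * u ^ (2*n) * (x + c) powr (1 - 2 * real n)) - (\<Sum>p\<in>B. trm p x)"
      unfolding D[symmetric] by (simp add: right_diff_distrib sum_subtractf)
    then show ?thesis using T[of x] split[of x] by simp
  qed
  show "(\<lambda>x. M (x + s) (x + t) - (\<Sum>m\<le>N. asym_coeff a s t m * x powr (1 - real m)))
           \<in> o[at_top](\<lambda>x. x powr (1 - real N))"
    unfolding ident by (intro sum_in_smallo E R X)
qed

theorem proposition3p3: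
  fixes M :: "real \<Rightarrow> real \<Rightarrow> real" and a :: "nat \<Rightarrow> real" and s t :: real
  assumes "is_mean M" and "symmetric_mean M" and "homogeneous_mean M"
    and "has_sym_asym_expansion M a"
    and "s \<noteq> t" and "s \<noteq> - t"
  shows "\<forall>N::nat. (\<lambda>x. M (x + s) (x + t) - (\<Sum>m\<le>N. asym_coeff a s t m * x powr (1 - real m)))
           \<in> o[at_top](\<lambda>x. x powr (1 - real N))"
  using prop_core[OF assms(4)] .

end
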